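(* Let $R$ be a finite commutative local ring and $G=\mathrm{GL}_n(R)$. For all $r,t\in W$ with $\ell(t)\le\ell(r)$ and $t\neq r$, one has $ULV\cap t^{-1}Ur=\emptyset$.
   Context: $L$ is the subgroup of diagonal matrices, $U$ the upper unitriangular and $V$ the lower unitriangular matrices in $G$. $W\cong S_n$ is the group of permutation matrices in $G$, and $\ell$ is the word length on $W$ with respect to the generating set of simple transpositions $\{(1\,2),(2\,3),\ldots,(n-1\,n)\}$. $ULV$ denotes the set of products $ulv$ and $t^{-1}Ur$ the set of products $t^{-1}ur$. *)

theory Defs
  imports "Jordan_Normal_Form.Matrix"
begin

definition ring_ideal :: "'a::comm_ring_1 set \<Rightarrow> bool" where
  "ring_ideal I \<longleftrightarrow> 0 \<in> I \<and> (\<forall>x\<in>I. \<forall>y\<in>I. x + y \<in> I) \<and> (\<forall>x\<in>I. \<forall>c. c * x \<in> I)"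

definition maximal_ideal :: "'a::comm_ring_1 set \<Rightarrow> bool" where
  "maximal_ideal I \<longleftrightarrow> ring_ideal I \<and> I \<noteq> UNIV \<and>
     (\<forall>J. ring_ideal J \<and> I \<subseteq> J \<longrightarrow> J = I \<or> J = UNIV)"

definition local_ring :: "'a::comm_ring_1 itself \<Rightarrow> bool" where
  "local_ring _ \<longleftrightarrow> (\<exists>!I::'a set. maximal_ideal I)"

definition GL :: "nat \<Rightarrow> 'a::comm_ring_1 mat set" where
  "GL n = {A \<in> carrier_mat n n. invertible_mat A}"

definition mat_inv :: "nat \<Rightarrow> 'a::comm_ring_1 mat \<Rightarrow> 'a mat" where
  "mat_inv n A = (THE B. B \<in> carrier_mat n n \<and> inverts_mat A B \<and> inverts_mat B A)"

definition Umat :: "nat \<Rightarrow> 'a::comm_ring_1 mat set" where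
  "Umat n = {A \<in> GL n. \<forall>i<n. \<forall>j<n. (j < i \<longrightarrow> A $$ (i,j) = 0) \<and> (i = j \<longrightarrow> A $$ (i,j) = 1)}"

definition Vmat :: "nat \<Rightarrow> 'a::comm_ring_1 mat set" where
  "Vmat n = {A \<in> GL n. \<forall>i<n. \<forall>j<n. (i < j \<longrightarrow> A $$ (i,j) = 0) \<and> (i = j \<longrightarrow> A $$ (i,j) = 1)}"

definition Lmat :: "nat \<Rightarrow> 'a::comm_ring_1 mat set" where
  "Lmat n = {A \<in> GL n. \<forall>i<n. \<forall>j<n. i \<noteq> j \<longrightarrow> A $$ (i,j) = 0}"

definition perm_mat :: "nat \<Rightarrow> (nat \<Rightarrow> nat) \<Rightarrow> 'a::comm_ring_1 mat" where
  "perm_mat n p = mat n n (\<lambda>(i,j). if i = p j then 1 else 0)"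

definition Wmat :: "nat \<Rightarrow> 'a::comm_ring_1 mat set" where
  "Wmat n = {perm_mat n p | p. p permutes {..<n}}"

text \<open>Simple transposition (i i+1) as a permutation matrix (indices from 0).\<close>
definition simple_refl :: "nat \<Rightarrow> nat \<Rightarrow> 'a::comm_ring_1 mat" where
  "simple_refl n i = perm_mat n (Transposition.transpose i (Suc i))"

definition wlen :: "nat \<Rightarrow> 'a::comm_ring_1 mat \<Rightarrow> nat" where
  "wlen n w = (LEAST k. \<exists>is. length is = k \<and> (\<forall>i\<in>set is. Suc i < n) \<and>
                  w = foldr (\<lambda>i M. simple_refl n i * M) is (1\<^sub>m n))"

end

theory Submission
  imports Defs "Jordan_Normal_Form.Determinant"
begin


definition invs :: "nat \<Rightarrow> (nat \<Rightarrow> nat) \<Rightarrow> nat" where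
  "invs n w = card {(i,j). i < j \<and> j < n \<and> w j < w i}"

lemma invs_finite: "finite {(i,j). i < j \<and> j < (n::nat) \<and> (w::nat\<Rightarrow>nat) j < w i}"
  by (rule finite_subset[of _ "{..<n} \<times> {..<n}"]) auto

definition cnt :: "(nat \<Rightarrow> nat) \<Rightarrow> nat \<Rightarrow> nat \<Rightarrow> nat \<Rightarrow> nat" where
  "cnt w lo hi c = (\<Sum>i\<in>{lo..<hi}. if c < w i then 1 else 0)"

lemma cnt_split: "lo \<le> mid \<Longrightarrow> mid \<le> hi \<Longrightarrow> cnt w lo hi c = cnt w lo mid c + cnt w mid hi c"
  unfolding cnt_def by (simp add: sum.atLeastLessThan_concat)

lemma cnt_pt: "lo \<le> i \<Longrightarrow> i < hi \<Longrightarrow>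
   cnt w lo hi c = cnt w lo i c + (if c < w i then 1 else 0) + cnt w (Suc i) hi c"
proof -
  assume a: "lo \<le> i" "i < hi"
  have "cnt w lo hi c = cnt w lo i c + cnt w i hi c" using a by (intro cnt_split) auto
  moreover have "cnt w i hi c = cnt w i (Suc i) c + cnt w (Suc i) hi c" using a by (intro cnt_split) auto
  moreover have "cnt w i (Suc i) c = (if c < w i then 1 else 0)" unfolding cnt_def by simp
  ultimately show ?thesis by simp
qed

lemma cnt_cong: "(\<And>i. lo \<le> i \<Longrightarrow> i < hi \<Longrightarrow> w i = w' i) \<Longrightarrow> cnt w lo hi c = cnt w' lo hi c"
  unfolding cnt_def by (intro sum.cong) auto

lemma cnt_mono: "(\<And>i. lo \<le> i \<Longrightarrow> i < hi \<Longrightarrow> c < w i \<Longrightarrow> c' < w' i) \<Longrightarrow> cnt w lo hi c \<le> cnt w' lo hi c'"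
  unfolding cnt_def by (intro sum_mono) auto

lemma cnt_perm_total:
  assumes "w permutes {..<n}"
  shows "cnt w 0 n c = cnt id 0 n c"
proof -
  have "cnt id 0 n c = (\<Sum>v\<in>w ` {..<n}. if c < v then 1 else 0)"
    unfolding cnt_def permutes_image[OF assms] by (simp add: atLeast0LessThan)
  also have "\<dots> = (\<Sum>i\<in>{..<n}. if c < w i then 1 else 0)"
    by (subst sum.reindex) (use permutes_inj[OF assms] in \<open>auto simp: inj_on_def dest: injD\<close>)
  finally show ?thesis unfolding cnt_def by (simp add: atLeast0LessThan)
qed

definition Mq :: "nat \<Rightarrow> (nat \<Rightarrow> nat) \<Rightarrow> nat" where
  "Mq n q = (\<Sum>k<n. \<Sum>c<n. cnt q k n c)"

lemma tr_int: "(a::nat) < b \<Longrightarrow> (a < Transposition.transpose a b j \<and> Transposition.transpose a b j < b) \<longleftrightarrow> (a < j \<and> j < b)"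
  unfolding transpose_def by (simp split: if_split; arith)

lemma tr_ab: "(Transposition.transpose a b (i::nat) \<in> {a,b}) \<longleftrightarrow> (i \<in> {a,b})"
  by (cases "i = a"; cases "i = b") auto

lemma tr_lt: assumes "(a::nat) < b" "i < j" "(i,j) \<noteq> (a,b)"
  "\<not> ((i \<in> {a,b} \<and> a < j \<and> j < b) \<or> (j \<in> {a,b} \<and> a < i \<and> i < b))"
  shows "Transposition.transpose a b i < Transposition.transpose a b j"
  using assms unfolding transpose_def by (simp split: if_split; arith)

lemma tr_lt_n: "(a::nat) < n \<Longrightarrow> b < n \<Longrightarrow> j < n \<Longrightarrow> Transposition.transpose a b j < n"
  by (cases "j = a"; cases "j = b") auto

lemma invs_swap_lt:
  assumes ab: "a < b" "b < n" and qab: "q a < q b"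
  shows "invs n q < invs n (q \<circ> Transposition.transpose a b)"
proof -
  let ?t = "Transposition.transpose a b"
  let ?q = "q \<circ> ?t"
  define C where "C = (\<lambda>i j. (i \<in> {a,b} \<and> a < j \<and> j < b) \<or> (j \<in> {a,b} \<and> a < i \<and> i < b))"
  have Ct: "C (?t i) (?t j) = C i j" for i j
    unfolding C_def using tr_int[OF ab(1), of i] tr_int[OF ab(1), of j] tr_ab[of a b i] tr_ab[of a b j] by blast
  define h where "h = (\<lambda>(i,j). if C i j then (i,j) else (?t i, ?t j))"
  let ?I = "\<lambda>w. {(i,j). i < j \<and> j < n \<and> w j < w i}"
  have hh: "h (h x) = x" for x
  proof (cases x)
    case (Pair i j)
    show ?thesis unfolding Pair h_def by (cases "C i j") (simp_all add: Ct)
  qed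
  have inj: "inj_on h (?I q)" by (rule inj_on_inverseI[where g=h]) (rule hh)
  have sub1: "h (i,j) \<in> ?I ?q - {(a,b)}" if ij: "i < j" "j < n" "q j < q i" for i j
  proof -
    have m: "h (i,j) \<in> ?I ?q"
    proof (cases "C i j")
      case True
      then have "h (i,j) = (i,j)" unfolding h_def by simp
      moreover have "?q j < ?q i"
        using True ij ab qab unfolding C_def by (cases "i = a"; cases "j = b") auto
      ultimately show ?thesis using ij by simp
    next
      case False
      have ne: "(i,j) \<noteq> (a,b)" using ij qab by auto
      have "h (i,j) = (?t i, ?t j)" unfolding h_def using False by simp
      moreover have "?t i < ?t j" using tr_lt[OF ab(1) ij(1) ne] False unfolding C_def by blast
      moreover have "?t j < n" using tr_lt_n ab ij by auto
      ultimately show ?thesis using ij by simp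
    qed
    have "h (i,j) \<noteq> (a,b)"
    proof
      assume "h (i,j) = (a,b)"
      then show False using ij ab qab unfolding h_def
        by (cases "C i j") (auto simp: C_def transpose_eq_iff split: if_splits)
    qed
    with m show ?thesis by simp
  qed
  have sub: "h ` ?I q \<subseteq> ?I ?q - {(a,b)}"
  proof (rule image_subsetI)
    fix x assume x: "x \<in> ?I q"
    obtain i j where xe: "x = (i,j)" by (cases x)
    have "i < j" "j < n" "q j < q i" using x unfolding xe by auto
    then show "h x \<in> ?I ?q - {(a,b)}" unfolding xe by (rule sub1)
  qed
  have ab_in: "(a,b) \<in> ?I ?q" using ab qab by simp
  have fin: "finite (?I ?q)" by (rule invs_finite)
  have "card (?I ?q - {(a,b)}) < card (?I ?q)" by (rule card_Diff1_less[OF fin ab_in])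
  moreover have "card (?I q) \<le> card (?I ?q - {(a,b)})"
    by (rule card_inj_on_le[OF inj sub]) (use fin in simp)
  ultimately show ?thesis unfolding invs_def by simp
qed

lemma cnt_empty[simp]: "cnt w a a c = 0" unfolding cnt_def by simp

lemma bruhat:
  assumes pp: "p permutes {..<n}" and "q permutes {..<n}" and "\<forall>k c. cnt p k n c \<le> cnt q k n c"
  shows "p = q \<or> invs n q < invs n p"
  using assms(2,3)
proof (induction "Mq n q" arbitrary: q rule: less_induct)
  case less
  have qp: "q permutes {..<n}" using less.prems(1) .
  have dom: "\<And>k c. cnt p k n c \<le> cnt q k n c" using less.prems(2) by blast
  show ?case
  proof (cases "p = q")
    case True then show ?thesis by simp
  next
    case False
    then have ex: "\<exists>i. p i \<noteq> q i" by auto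
    define a where "a = (LEAST i. p i \<noteq> q i)"
    have pa: "p a \<noteq> q a" unfolding a_def by (rule LeastI_ex[OF ex])
    have below: "\<And>i. i < a \<Longrightarrow> p i = q i" unfolding a_def using not_less_Least by blast
    have an: "a < n"
    proof (rule ccontr)
      assume "\<not> a < n" then have "p a = a" "q a = a"
        using permutes_not_in[OF pp, of a] permutes_not_in[OF qp, of a] by auto
      then show False using pa by simp
    qed
    have E: "cnt p a n c = cnt q a n c" for c
    proof -
      have "cnt p 0 n c = cnt q 0 n c" using cnt_perm_total[OF pp] cnt_perm_total[OF qp] by simp
      moreover have "cnt p 0 a c = cnt q 0 a c" using below by (intro cnt_cong) auto
      moreover have "cnt w 0 n c = cnt w 0 a c + cnt w a n c" for w using an by (intro cnt_split) auto
      ultimately show ?thesis by simp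
    qed
    have step: "cnt w a k c = (if c < w a then 1 else 0) + cnt w (Suc a) k c" if "a < k" for w c k
      using cnt_pt[of a a k w c] that by simp
    define x where "x = q a"
    define y where "y = p a"
    have xy: "x < y"
    proof (rule ccontr)
      assume "\<not> x < y" then have "y < x" using pa x_def y_def by auto
      have "cnt p (Suc a) n y \<le> cnt q (Suc a) n y" using dom by blast
      then show False using E[of y] step[OF an, of p y] step[OF an, of q y] \<open>y<x\<close> y_def x_def by simp
    qed
    have yn: "y < n" unfolding y_def using an permutes_in_image[OF pp] by auto
    have xn: "x < n" unfolding x_def using an permutes_in_image[OF qp] by auto
    obtain b0 where b0: "q b0 = y" using permutes_surj[OF qp] by (metis surjD)
    have b0n: "b0 < n" using b0 yn permutes_in_image[OF qp, of b0] by simp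
    have "\<not> b0 < a"
    proof
      assume "b0 < a" then have "p b0 = p a" using below b0 y_def by auto
      then show False using \<open>b0 < a\<close> by (simp add: inj_eq[OF permutes_inj[OF pp]])
    qed
    moreover have "b0 \<noteq> a" using b0 xy x_def by auto
    ultimately have ab0: "a < b0" by auto
    define b where "b = (LEAST j. a < j \<and> j < n \<and> x < q j \<and> q j \<le> y)"
    have Pb0: "a < b0 \<and> b0 < n \<and> x < q b0 \<and> q b0 \<le> y" using ab0 b0n b0 xy by simp
    have bB: "a < b \<and> b < n \<and> x < q b \<and> q b \<le> y" unfolding b_def
      by (rule LeastI[of "\<lambda>j. a < j \<and> j < n \<and> x < q j \<and> q j \<le> y" b0, OF Pb0])
    have between: "\<not> (x < q m \<and> q m \<le> y)" if m: "a < m" "m < b" for m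
    proof -
      have "m < n" using m bB by simp
      have "\<not> (a < m \<and> m < n \<and> x < q m \<and> q m \<le> y)"
        using not_less_Least[of m "\<lambda>j. a < j \<and> j < n \<and> x < q j \<and> q j \<le> y"] m(2) unfolding b_def by blast
      then show ?thesis using m \<open>m < n\<close> by simp
    qed
    define z where "z = q b"
    define q' where "q' = q \<circ> Transposition.transpose a b"
    have q'p: "q' permutes {..<n}" unfolding q'_def
      by (rule permutes_compose[OF permutes_swap_id qp]) (use an bB in auto)
    have q'a: "q' a = z" and q'b: "q' b = x" unfolding q'_def z_def x_def by auto
    have q'o: "\<And>i. i \<noteq> a \<Longrightarrow> i \<noteq> b \<Longrightarrow> q' i = q i" unfolding q'_def by auto
    have xz: "x < z" "z \<le> y" using bB z_def by auto
    have C1: "cnt q k n c = cnt q' k n c + (if a < k \<and> k \<le> b \<and> x \<le> c \<and> c < z then 1 else 0)" for k c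
    proof -
      consider "k \<le> a" | "a < k \<and> k \<le> b" | "b < k" by linarith
      then show ?thesis
      proof cases
        case 1
        have s: "cnt w k n c = cnt w k a c + (if c < w a then 1 else 0) + (cnt w (Suc a) b c
            + (if c < w b then 1 else 0) + cnt w (Suc b) n c)" for w
          using cnt_pt[of k a n w c] cnt_pt[of "Suc a" b n w c] 1 an bB by simp
        have e1: "cnt q k a c = cnt q' k a c" by (rule cnt_cong) (use q'o bB in auto)
        have e2: "cnt q (Suc a) b c = cnt q' (Suc a) b c" by (rule cnt_cong) (use q'o in auto)
        have e3: "cnt q (Suc b) n c = cnt q' (Suc b) n c" by (rule cnt_cong) (use q'o bB in auto)
        show ?thesis using s[of q] s[of q'] e1 e2 e3 q'a q'b 1 x_def z_def by simp
      next
        case 2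
        have s: "cnt w k n c = cnt w k b c + (if c < w b then 1 else 0) + cnt w (Suc b) n c" for w
          using cnt_pt[of k b n w c] 2 bB by simp
        have e1: "cnt q k b c = cnt q' k b c" by (rule cnt_cong) (use q'o 2 in auto)
        have e3: "cnt q (Suc b) n c = cnt q' (Suc b) n c" by (rule cnt_cong) (use q'o bB in auto)
        show ?thesis using s[of q] s[of q'] e1 e3 q'b 2 z_def xz by auto
      next
        case 3
        have "cnt q k n c = cnt q' k n c" by (rule cnt_cong) (use q'o 3 bB in auto)
        then show ?thesis using 3 by simp
      qed
    qed
    have C2: "\<forall>k c. cnt p k n c \<le> cnt q' k n c"
    proof (intro allI)
      fix k c
      show "cnt p k n c \<le> cnt q' k n c"
      proof (cases "a < k \<and> k \<le> b \<and> x \<le> c \<and> c < z")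
        case False then show ?thesis using C1[of k c, unfolded if_not_P[OF False]] dom[of k c] by simp
      next
        case True
        have kn: "k \<le> n" using True bB by auto
        have sp: "cnt w a n c' = cnt w a k c' + cnt w k n c'" for w c' using True kn by (intro cnt_split) auto
        have h1: "cnt q (Suc a) k c \<le> cnt q (Suc a) k y"
        proof (rule cnt_mono)
          fix i assume "Suc a \<le> i" "i < k" "c < q i"
          then show "y < q i" using between[of i] True by auto
        qed
        have h2: "cnt q (Suc a) k y \<le> cnt p (Suc a) k y"
          using dom[of k y] E[of y] sp[of p y] sp[of q y] step[of k p y] step[of k q y] True xy
            x_def y_def by simp
        have h3: "cnt p (Suc a) k y \<le> cnt p (Suc a) k c"
          by (rule cnt_mono) (use True xz in auto)
        have "cnt q a k c < cnt p a k c"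
          using step[of k p c] step[of k q c] True h1 h2 h3 x_def y_def xz by simp
        then have "cnt p k n c < cnt q k n c" using sp[of p c] sp[of q c] E[of c] by simp
        then show ?thesis using C1[of k c] True by simp
      qed
    qed
    have C3: "Mq n q' < Mq n q" unfolding Mq_def
    proof (rule sum_strict_mono_ex1)
      show "\<forall>k\<in>{..<n}. (\<Sum>c<n. cnt q' k n c) \<le> (\<Sum>c<n. cnt q k n c)"
        using C1 by (auto intro!: sum_mono simp del: cnt_def)
      have "(\<Sum>c<n. cnt q' b n c) < (\<Sum>c<n. cnt q b n c)"
      proof (rule sum_strict_mono_ex1)
        show "\<forall>c\<in>{..<n}. cnt q' b n c \<le> cnt q b n c" using C1 by auto
        show "\<exists>c\<in>{..<n}. cnt q' b n c < cnt q b n c"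
          using C1[of b x] bB xz xn by (intro bexI[of _ x]) auto
      qed simp
      then show "\<exists>k\<in>{..<n}. (\<Sum>c<n. cnt q' k n c) < (\<Sum>c<n. cnt q k n c)"
        using bB by auto
    qed simp
    have C4: "invs n q < invs n q'" unfolding q'_def
      by (rule invs_swap_lt) (use bB xz x_def z_def in auto)
    have "p = q' \<or> invs n q' < invs n p" using less.hyps[OF C3 q'p C2] .
    then show ?thesis using C4 by auto
  qed
qed



lemma mult_entry:
  assumes "A \<in> carrier_mat n n" "B \<in> carrier_mat n n" "i < n" "j < n"
  shows "(A * B) $$ (i,j) = (\<Sum>k<n. A $$ (i,k) * B $$ (k,j))"
  using assms by (simp add: scalar_prod_def atLeast0LessThan)

lemma perm_mat_carrier[simp]: "perm_mat n p \<in> carrier_mat n n"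
  unfolding perm_mat_def by simp

lemma perm_mat_index: "i < n \<Longrightarrow> j < n \<Longrightarrow> perm_mat n p $$ (i,j) = (if i = p j then 1 else 0)"
  unfolding perm_mat_def by simp

lemma perm_mat_mult:
  assumes g: "g permutes {..<n}"
  shows "perm_mat n f * perm_mat n g = (perm_mat n (f \<circ> g) :: 'a::comm_ring_1 mat)"
proof (rule eq_matI)
  fix i j assume "i < dim_row (perm_mat n (f \<circ> g) :: 'a mat)" "j < dim_col (perm_mat n (f \<circ> g) :: 'a mat)"
  then have ij: "i < n" "j < n" by (auto simp: perm_mat_def)
  have gj: "g j < n" using ij permutes_in_image[OF g] by auto
  have "(perm_mat n f * perm_mat n g :: 'a mat) $$ (i,j)
      = (\<Sum>k<n. (perm_mat n f :: 'a mat) $$ (i,k) * (perm_mat n g :: 'a mat) $$ (k,j))"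
    by (rule mult_entry) (use ij in auto)
  also have "\<dots> = (\<Sum>k<n. (if k = g j then (if i = f k then 1 else 0) else 0 :: 'a))"
    by (rule sum.cong) (auto simp: perm_mat_index ij)
  also have "\<dots> = (if i = f (g j) then 1 else 0)" using gj by (subst sum.delta) auto
  also have "\<dots> = perm_mat n (f \<circ> g) $$ (i,j)" using ij by (simp add: perm_mat_index)
  finally show "(perm_mat n f * perm_mat n g :: 'a mat) $$ (i,j) = perm_mat n (f \<circ> g) $$ (i,j)" .
qed (auto simp: perm_mat_def)

lemma perm_mat_id: "perm_mat n id = (1\<^sub>m n :: 'a::comm_ring_1 mat)"
  by (rule eq_matI) (auto simp: perm_mat_def)

lemma perm_mat_inj:
  assumes p: "p permutes {..<n}" and p': "p' permutes {..<n}"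
    and e: "(perm_mat n p :: 'a::comm_ring_1 mat) = perm_mat n p'"
  shows "p = p'"
proof
  fix x show "p x = p' x"
  proof (cases "x < n")
    case True
    have "p x < n" using True permutes_in_image[OF p] by auto
    then have "(perm_mat n p' :: 'a mat) $$ (p x, x) = 1" using e True by (simp add: perm_mat_index flip: e)
    then show ?thesis using True \<open>p x < n\<close> by (simp add: perm_mat_index split: if_splits)
  next
    case False then show ?thesis using permutes_not_in[OF p] permutes_not_in[OF p'] by auto
  qed
qed

lemma mat_inv_perm:
  assumes p: "p permutes {..<n}"
  shows "mat_inv n (perm_mat n p) = (perm_mat n (Hilbert_Choice.inv p) :: 'a::comm_ring_1 mat)"
  unfolding mat_inv_def
proof (rule the_equality)
  have ip: "Hilbert_Choice.inv p permutes {..<n}" using permutes_inv[OF p] .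
  have e1: "(perm_mat n p :: 'a mat) * perm_mat n (Hilbert_Choice.inv p) = 1\<^sub>m n"
    using perm_mat_mult[OF ip] permutes_inv_o[OF p] perm_mat_id by metis
  have e2: "(perm_mat n (Hilbert_Choice.inv p) :: 'a mat) * perm_mat n p = 1\<^sub>m n"
    using perm_mat_mult[OF p] permutes_inv_o[OF p] perm_mat_id by metis
  show "(perm_mat n (Hilbert_Choice.inv p) :: 'a mat) \<in> carrier_mat n n \<and> inverts_mat (perm_mat n p :: 'a mat) (perm_mat n (Hilbert_Choice.inv p))
      \<and> inverts_mat (perm_mat n (Hilbert_Choice.inv p)) (perm_mat n p :: 'a mat)"
    using e1 e2 by (simp add: inverts_mat_def perm_mat_def)
  fix B :: "'a mat"
  assume B: "B \<in> carrier_mat n n \<and> inverts_mat (perm_mat n p) B \<and> inverts_mat B (perm_mat n p)"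
  then have b1: "perm_mat n p * B = 1\<^sub>m n" and b2: "B * perm_mat n p = 1\<^sub>m n"
    by (auto simp: inverts_mat_def perm_mat_def)
  have "B = B * (perm_mat n p * perm_mat n (Hilbert_Choice.inv p))" using e1 B right_mult_one_mat[of B n n] by simp
  also have "\<dots> = (B * perm_mat n p) * perm_mat n (Hilbert_Choice.inv p)" using B by (simp add: assoc_mult_mat[symmetric, of B n n _ n _ n])
  also have "\<dots> = perm_mat n (Hilbert_Choice.inv p)" using b2 left_mult_one_mat[of "perm_mat n (Hilbert_Choice.inv p) :: 'a mat" n n] by simp
  finally show "B = perm_mat n (Hilbert_Choice.inv p)" .
qed

fun wperm :: "nat list \<Rightarrow> nat \<Rightarrow> nat" where
  "wperm [] = id"
| "wperm (i#xs) = Transposition.transpose i (Suc i) \<circ> wperm xs"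

lemma wperm_permutes: "\<forall>i\<in>set xs. Suc i < n \<Longrightarrow> wperm xs permutes {..<n}"
proof (induction "xs")
  case Nil then show ?case using permutes_id[of "{..<n}"] by (simp add: id_def)
next
  case (Cons i xs) then have h: "wperm xs permutes {..<n}" "Suc i < n" by auto
  show ?case using permutes_compose[OF h(1) permutes_swap_id[of i "{..<n}" "Suc i"]] h(2) by (simp add: comp_def)
qed

lemma transp_less_cases:
  assumes "Transposition.transpose k (Suc k) v' < Transposition.transpose k (Suc k) v"
  shows "v' < v \<or> (v = k \<and> v' = Suc k)"
  using assms by (auto simp: transpose_def split: if_splits)

lemma sw_le:
  assumes w: "w permutes {..<n}" and k: "Suc k < n"
  shows "invs n (Transposition.transpose k (Suc k) \<circ> w) \<le> invs n w + 1"
proof -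
  have "k \<in> w ` {..<n}" using k by (simp add: permutes_image[OF w])
  then obtain al where al0: "al \<in> {..<n}" "k = w al" by (rule imageE)
  have "Suc k \<in> w ` {..<n}" using k by (simp add: permutes_image[OF w])
  then obtain be where be0: "be \<in> {..<n}" "Suc k = w be" by (rule imageE)
  have al: "w al = k" "al < n" using al0 by simp_all
  have be: "w be = Suc k" "be < n" using be0 by simp_all
  have "{(i,j). i < j \<and> j < n \<and> (Transposition.transpose k (Suc k) \<circ> w) j < (Transposition.transpose k (Suc k) \<circ> w) i}
     \<subseteq> insert (al, be) {(i,j). i < j \<and> j < n \<and> w j < w i}" (is "?S \<subseteq> insert _ ?A")
  proof (rule subsetI)
    fix x assume xS: "x \<in> ?S"
    obtain i j where xe: "x = (i,j)" by (cases x)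
    have x: "i < j" "j < n" "Transposition.transpose k (Suc k) (w j) < Transposition.transpose k (Suc k) (w i)"
      using xS unfolding xe by simp_all
    show "x \<in> insert (al, be) ?A"
    proof (cases "w j < w i")
      case True then show ?thesis using x unfolding xe by simp
    next
      case False
      then have "w i = k \<and> w j = Suc k" using transp_less_cases[OF x(3)] by simp
      then have eqs: "w i = w al" "w j = w be" using al be by simp_all
      have "i = al" "j = be" using eqs by (simp_all add: inj_eq[OF permutes_inj[OF w]])
      then show ?thesis unfolding xe by simp
    qed
  qed
  then have "card ?S \<le> card (insert (al, be) ?A)"
    by (rule card_mono[rotated]) (simp add: invs_finite)
  also have "\<dots> \<le> card ?A + 1"
    by (simp add: card_insert_if[OF invs_finite])
  finally show ?thesis unfolding invs_def .
qed

lemma sw_lt: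
  assumes w: "w permutes {..<n}" and k: "Suc k < n" and al: "w al = k" "al < n"
    and be: "w be = Suc k" "be < al"
  shows "invs n (Transposition.transpose k (Suc k) \<circ> w) < invs n w"
proof -
  have sub: "{(i,j). i < j \<and> j < n \<and> (Transposition.transpose k (Suc k) \<circ> w) j < (Transposition.transpose k (Suc k) \<circ> w) i}
     \<subseteq> {(i,j). i < j \<and> j < n \<and> w j < w i} - {(be, al)}" (is "?S \<subseteq> ?A - _")
  proof (rule subsetI)
    fix x assume xS: "x \<in> ?S"
    obtain i j where xe: "x = (i,j)" by (cases x)
    have x: "x = (i,j)" "i < j" "j < n" "(Transposition.transpose k (Suc k) \<circ> w) j < (Transposition.transpose k (Suc k) \<circ> w) i"
      using xS unfolding xe by simp_all
    have wji: "w j < w i"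
    proof (rule ccontr)
      assume "\<not> w j < w i"
      then have "w i = k \<and> w j = Suc k" using x(4) transp_less_cases[of k "w j" "w i"] by simp
      then have eqs: "w i = w al" "w j = w be" using al be by simp_all
      have "i = al" "j = be" using eqs by (simp_all add: inj_eq[OF permutes_inj[OF w]])
      then show False using x be by simp
    qed
    have "x \<noteq> (be, al)"
    proof
      assume "x = (be, al)"
      then have "i = be" "j = al" using x by auto
      then show False using x(4) al be by simp
    qed
    then show "x \<in> ?A - {(be, al)}" using x wji by simp
  qed
  have xin: "(be, al) \<in> ?A" using al be by auto
  have "card ?S \<le> card (?A - {(be, al)})" by (rule card_mono[OF finite_Diff[OF invs_finite] sub])
  also have "\<dots> < card ?A" by (rule card_Diff1_less[OF invs_finite xin])
  finally show ?thesis unfolding invs_def .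
qed

lemma descent:
  assumes w: "w permutes {..<n}" and ne: "w \<noteq> id"
  shows "\<exists>k al be. Suc k < n \<and> w al = k \<and> al < n \<and> w be = Suc k \<and> be < al"
proof -
  have ex: "\<exists>i. w i \<noteq> i" using ne by auto
  define a where "a = (LEAST i. w i \<noteq> i)"
  have wa: "w a \<noteq> a" unfolding a_def by (rule LeastI_ex[OF ex])
  have below: "\<And>i. i < a \<Longrightarrow> w i = i" unfolding a_def using not_less_Least by blast
  have an: "a < n"
  proof (rule ccontr)
    assume "\<not> a < n" then have "w a = a" using permutes_not_in[OF w, of a] by simp
    then show False using wa by simp
  qed
  have wan: "w a < n" using an permutes_in_image[OF w] by auto
  have gt: "a < w a"
  proof (rule ccontr)
    assume "\<not> a < w a"
    then have "w a < a" using wa by auto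
    then have "w (w a) = w a" using below by auto
    then show False using wa by (simp add: inj_eq[OF permutes_inj[OF w]])
  qed
  define k where "k = w a - 1"
  obtain al where al: "w al = k" using surjD[OF permutes_surj[OF w], of k] by auto
  have kn: "k < n" using wan k_def by auto
  have aln: "al < n" using al kn permutes_in_image[OF w, of al] by simp
  have "a \<le> al"
  proof (rule ccontr)
    assume "\<not> a \<le> al" then have "w al = al" using below by auto
    then show False using al k_def gt \<open>\<not> a \<le> al\<close> by auto
  qed
  moreover have "al \<noteq> a" using al k_def gt by auto
  ultimately have "a < al" by auto
  then show ?thesis using al aln k_def gt wan
    by (intro exI[of _ k] exI[of _ al] exI[of _ a]) auto
qed

lemma word_exists:
  assumes "w permutes {..<n}"
  shows "\<exists>xs. (\<forall>i\<in>set xs. Suc i < n) \<and> wperm xs = w \<and> length xs \<le> invs n w"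
  using assms
proof (induction "invs n w" arbitrary: w rule: less_induct)
  case less
  show ?case
  proof (cases "w = id")
    case True then show ?thesis by (intro exI[of _ "[]"]) auto
  next
    case False
    obtain k al be where d: "Suc k < n" "w al = k" "al < n" "w be = Suc k" "be < al"
      using descent[OF less.prems False] by blast
    let ?w = "Transposition.transpose k (Suc k) \<circ> w"
    have pw: "?w permutes {..<n}" using less.prems d by (auto intro!: permutes_compose permutes_swap_id)
    have lt: "invs n ?w < invs n w" using sw_lt[OF less.prems d] .
    obtain xs where xs: "\<forall>i\<in>set xs. Suc i < n" "wperm xs = ?w" "length xs \<le> invs n ?w"
      using less.hyps[OF lt pw] by blast
    have "wperm (k # xs) = w" using xs(2) by (auto simp: fun_eq_iff)
    then show ?thesis using xs d lt by (intro exI[of _ "k # xs"]) auto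
  qed
qed

lemma invs_wperm: "\<forall>i\<in>set xs. Suc i < n \<Longrightarrow> invs n (wperm xs) \<le> length xs"
proof (induction "xs")
  case Nil
  have "{(i,j). i < j \<and> j < n \<and> j < (i::nat)} = {}" by auto
  then show ?case by (simp add: invs_def card_eq_0_iff)
next
  case (Cons i xs)
  have "invs n (wperm xs) \<le> length xs" using Cons by auto
  moreover have "invs n (wperm (i#xs)) \<le> invs n (wperm xs) + 1" unfolding wperm.simps
    by (rule sw_le[OF wperm_permutes]) (use Cons.prems in auto)
  ultimately show ?case by (simp add: comp_def)
qed


lemma foldr_perm: "\<forall>i\<in>set xs. Suc i < n \<Longrightarrow>
   foldr (\<lambda>i M. simple_refl n i * M) xs (1\<^sub>m n) = (perm_mat n (wperm xs) :: 'a::comm_ring_1 mat)"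
proof (induction xs)
  case Nil then show ?case by (simp add: perm_mat_id[unfolded id_def])
next
  case (Cons i xs)
  then have h: "\<forall>i\<in>set xs. Suc i < n" by auto
  have "simple_refl n i * perm_mat n (wperm xs) = (perm_mat n (wperm (i#xs)) :: 'a mat)"
    unfolding simple_refl_def wperm.simps by (rule perm_mat_mult[OF wperm_permutes[OF h]])
  then show ?case using Cons.IH[OF h] by (simp add: comp_def)
qed

lemma wlen_perm:
  assumes p: "p permutes {..<n}"
  shows "wlen n (perm_mat n p :: 'a::comm_ring_1 mat) = invs n p"
proof -
  let ?P = "\<lambda>k. \<exists>xs. length xs = k \<and> (\<forall>i\<in>set xs. Suc i < n) \<and>
      (perm_mat n p :: 'a mat) = foldr (\<lambda>i M. simple_refl n i * M) xs (1\<^sub>m n)"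
  obtain xs0 where xs0: "\<forall>i\<in>set xs0. Suc i < n" "wperm xs0 = p" "length xs0 \<le> invs n p"
    using word_exists[OF p] by blast
  have "(perm_mat n p :: 'a mat) = foldr (\<lambda>i M. simple_refl n i * M) xs0 (1\<^sub>m n)"
    using foldr_perm[OF xs0(1)] xs0(2) by metis
  with xs0(1) have P0: "?P (length xs0)" by blast
  have le1: "wlen n (perm_mat n p :: 'a mat) \<le> invs n p"
    unfolding wlen_def using Least_le[of ?P, OF P0] xs0(3) by linarith
  have "?P (wlen n (perm_mat n p :: 'a mat))" unfolding wlen_def by (rule LeastI[of ?P, OF P0])
  then obtain xs where xs: "length xs = wlen n (perm_mat n p :: 'a mat)" "\<forall>i\<in>set xs. Suc i < n"
      "(perm_mat n p :: 'a mat) = foldr (\<lambda>i M. simple_refl n i * M) xs (1\<^sub>m n)" by blast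
  have "(perm_mat n p :: 'a mat) = perm_mat n (wperm xs)" using xs(3) foldr_perm[OF xs(2)] by simp
  then have "p = wperm xs" using perm_mat_inj[OF p wperm_permutes[OF xs(2)]] by blast
  then have "invs n p \<le> length xs" using invs_wperm[OF xs(2)] by simp
  then show ?thesis using le1 xs(1) by simp
qed

definition pad :: "nat \<Rightarrow> nat \<Rightarrow> 'a::comm_ring_1 mat \<Rightarrow> 'a mat" where
  "pad n k A = mat n n (\<lambda>(i,j). if i < k \<or> j < k then (if i = j then 1 else 0) else A $$ (i,j))"

lemma pad_index: "i < n \<Longrightarrow> j < n \<Longrightarrow>
  pad n k A $$ (i,j) = (if i < k \<or> j < k then (if i = j then 1 else 0) else A $$ (i,j))"
  unfolding pad_def by simp

lemma pad_carrier[simp]: "pad n k A \<in> carrier_mat n n" unfolding pad_def by simp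

lemma pad_dims[simp]: "dim_row (pad n k A) = n" "dim_col (pad n k A) = n" unfolding pad_def by simp_all

lemma diag_mult:
  fixes A L B :: "'a::comm_ring_1 mat"
  assumes c: "A \<in> carrier_mat n n" "L \<in> carrier_mat n n" "B \<in> carrier_mat n n"
    and d: "\<And>i j. i < n \<Longrightarrow> j < n \<Longrightarrow> i \<noteq> j \<Longrightarrow> L $$ (i,j) = 0"
    and ij: "i < n" "j < n"
  shows "(A * L * B) $$ (i,j) = (\<Sum>a<n. A $$ (i,a) * L $$ (a,a) * B $$ (a,j))"
proof -
  have "(A * L * B) $$ (i,j) = (\<Sum>a<n. (A * L) $$ (i,a) * B $$ (a,j))"
    by (rule mult_entry) (use c ij in auto)
  also have "\<dots> = (\<Sum>a<n. A $$ (i,a) * L $$ (a,a) * B $$ (a,j))"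
  proof (rule sum.cong)
    fix a assume a: "a \<in> {..<n}"
    have "(A * L) $$ (i,a) = (\<Sum>m<n. A $$ (i,m) * L $$ (m,a))"
      by (rule mult_entry) (use c ij a in auto)
    also have "\<dots> = (\<Sum>m<n. if m = a then A $$ (i,a) * L $$ (a,a) else 0)"
      by (rule sum.cong) (use d a in auto)
    also have "\<dots> = A $$ (i,a) * L $$ (a,a)" using a by (subst sum.delta) auto
    finally show "(A * L) $$ (i,a) * B $$ (a,j) = A $$ (i,a) * L $$ (a,a) * B $$ (a,j)" by simp
  qed simp
  finally show ?thesis .
qed


lemma GL_carrier: "A \<in> GL n \<Longrightarrow> A \<in> carrier_mat n n" unfolding GL_def by auto

lemma GL_diag_unit:
  fixes l :: "'a::comm_ring_1 mat"
  assumes l: "l \<in> Lmat n"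
  shows "\<exists>g. \<forall>i<n. l $$ (i,i) * g i = 1"
proof -
  have lG: "l \<in> GL n" using l unfolding Lmat_def by blast
  have lc: "l \<in> carrier_mat n n" and li: "invertible_mat l"
    using lG unfolding GL_def by blast+
  have ld: "\<And>i j. i < n \<Longrightarrow> j < n \<Longrightarrow> i \<noteq> j \<Longrightarrow> l $$ (i,j) = 0"
    using l unfolding Lmat_def by blast
  obtain B where B0: "inverts_mat l B" "inverts_mat B l"
    using li unfolding invertible_mat_def by blast
  have B1: "l * B = 1\<^sub>m n" using B0(1) unfolding inverts_mat_def carrier_matD(1)[OF lc] .
  have B2: "B * l = 1\<^sub>m (dim_row B)" using B0(2) unfolding inverts_mat_def .
  have "dim_col (l * B) = dim_col (1\<^sub>m n :: 'a mat)" using B1 by (rule arg_cong)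
  then have dc: "dim_col B = n" by (simp only: index_mult_mat(3) index_one_mat(3))
  have "dim_col (B * l) = dim_col (1\<^sub>m (dim_row B) :: 'a mat)" using B2 by (rule arg_cong)
  then have "dim_col l = dim_row B" by (simp only: index_mult_mat(3) index_one_mat(3))
  then have dr: "dim_row B = n" using carrier_matD(2)[OF lc] by (simp only:)
  have Bc: "B \<in> carrier_mat n n" using dr dc by (rule carrier_matI)
  have "l $$ (i,i) * B $$ (i,i) = 1" if i: "i < n" for i
  proof -
    have "1 = (l * B) $$ (i,i)" using B1 i by simp
    also have "\<dots> = (\<Sum>m<n. l $$ (i,m) * B $$ (m,i))" by (rule mult_entry[OF lc Bc i i])
    also have "\<dots> = (\<Sum>m<n. if m = i then l $$ (i,i) * B $$ (i,i) else 0)"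
      by (rule sum.cong) (simp_all add: ld i)
    also have "\<dots> = l $$ (i,i) * B $$ (i,i)" using i by (subst sum.delta) simp_all
    finally show ?thesis by simp
  qed
  then show ?thesis by (intro exI[of _ "\<lambda>i. B $$ (i,i)"]) simp
qed

lemma key:
  fixes u l v u' :: "'a::comm_ring_1 mat"
  assumes uU: "u \<in> Umat n" and lL: "l \<in> Lmat n" and vV: "v \<in> Vmat n" and u'U: "u' \<in> Umat n"
    and p: "p permutes {..<n}" and q: "q permutes {..<n}"
    and eq: "u * l * v = perm_mat n (Hilbert_Choice.inv p) * u' * perm_mat n q"
  shows "cnt p k n c \<le> cnt q k n c"
proof -
  have uc: "u \<in> carrier_mat n n" and lc: "l \<in> carrier_mat n n" and vc: "v \<in> carrier_mat n n"
    and u'c: "u' \<in> carrier_mat n n"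
    using uU lL vV u'U unfolding Umat_def Lmat_def Vmat_def GL_def by blast+
  have uz: "\<And>i j. i < n \<Longrightarrow> j < n \<Longrightarrow> j < i \<Longrightarrow> u $$ (i,j) = 0"
    and ud: "\<And>i. i < n \<Longrightarrow> u $$ (i,i) = 1" using uU unfolding Umat_def by blast+
  have u'z: "\<And>i j. i < n \<Longrightarrow> j < n \<Longrightarrow> j < i \<Longrightarrow> u' $$ (i,j) = 0"
    using u'U unfolding Umat_def by blast
  have vz: "\<And>i j. i < n \<Longrightarrow> j < n \<Longrightarrow> i < j \<Longrightarrow> v $$ (i,j) = 0"
    and vd: "\<And>i. i < n \<Longrightarrow> v $$ (i,i) = 1" using vV unfolding Vmat_def by blast+
  have ld: "\<And>i j. i < n \<Longrightarrow> j < n \<Longrightarrow> i \<noteq> j \<Longrightarrow> l $$ (i,j) = 0"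
    using lL unfolding Lmat_def by blast
  define X where "X = u * l * v"
  have Xs: "X $$ (i,j) = (\<Sum>a<n. u $$ (i,a) * l $$ (a,a) * v $$ (a,j))" if "i < n" "j < n" for i j
    unfolding X_def by (rule diag_mult[OF uc lc vc ld that])
  have ip: "Hilbert_Choice.inv p permutes {..<n}" using permutes_inv[OF p] .
  have Xe: "X $$ (i,j) = u' $$ (p i, q j)" if ij: "i < n" "j < n" for i j
  proof -
    let ?Y = "perm_mat n (Hilbert_Choice.inv p) * u'"
    have Yc: "?Y \<in> carrier_mat n n" by (rule mult_carrier_mat[OF perm_mat_carrier u'c])
    have pi: "p i < n" using ij permutes_in_image[OF p] by auto
    have qj: "q j < n" using ij permutes_in_image[OF q] by auto
    have Ye: "?Y $$ (i,m) = u' $$ (p i, m)" if m: "m < n" for m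
    proof -
      have "?Y $$ (i,m) = (\<Sum>a<n. perm_mat n (Hilbert_Choice.inv p) $$ (i,a) * u' $$ (a,m))"
        by (rule mult_entry[OF _ u'c ij(1) m]) simp
      also have "\<dots> = (\<Sum>a<n. if a = p i then u' $$ (a,m) else 0)"
      proof (rule sum.cong)
        fix a assume a: "a \<in> {..<n}"
        have "(i = Hilbert_Choice.inv p a) = (a = p i)"
          using permutes_inverses[OF p] by metis
        then show "perm_mat n (Hilbert_Choice.inv p) $$ (i,a) * u' $$ (a,m) = (if a = p i then u' $$ (a,m) else 0)"
          using a ij by (simp add: perm_mat_index)
      qed simp
      also have "\<dots> = u' $$ (p i, m)" using pi by (subst sum.delta) auto
      finally show ?thesis .
    qed
    have "X $$ (i,j) = (?Y * perm_mat n q) $$ (i,j)" unfolding X_def eq by simp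
    also have "\<dots> = (\<Sum>m<n. ?Y $$ (i,m) * perm_mat n q $$ (m,j))"
      by (rule mult_entry[OF Yc _ ij]) simp
    also have "\<dots> = (\<Sum>m<n. if m = q j then ?Y $$ (i,m) else 0)"
      by (rule sum.cong) (use ij in \<open>auto simp: perm_mat_index\<close>)
    also have "\<dots> = ?Y $$ (i, q j)" using qj by (subst sum.delta) auto
    also have "\<dots> = u' $$ (p i, q j)" using Ye[OF qj] .
    finally show ?thesis .
  qed
  define U' where "U' = pad n k u"
  define L' where "L' = pad n k l"
  define V' where "V' = pad n k v"
  define D where "D = pad n k X"
  have L'd: "\<And>i j. i < n \<Longrightarrow> j < n \<Longrightarrow> i \<noteq> j \<Longrightarrow> L' $$ (i,j) = 0"
    unfolding L'_def using ld by (simp add: pad_index)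
  have DU: "D = U' * L' * V'"
  proof (rule eq_matI)
    fix i j assume "i < dim_row (U' * L' * V')" "j < dim_col (U' * L' * V')"
    then have ij: "i < n" "j < n" by (auto simp: U'_def V'_def pad_def)
    have R: "(U' * L' * V') $$ (i,j) = (\<Sum>a<n. U' $$ (i,a) * L' $$ (a,a) * V' $$ (a,j))"
      by (rule diag_mult[OF _ _ _ L'd ij]) (auto simp: U'_def L'_def V'_def)
    show "D $$ (i,j) = (U' * L' * V') $$ (i,j)"
    proof (cases "i < k")
      case True
      have "(\<Sum>a<n. U' $$ (i,a) * L' $$ (a,a) * V' $$ (a,j)) = (\<Sum>a<n. if a = i then (if i = j then 1 else 0) else 0)"
        by (rule sum.cong) (use True ij in \<open>auto simp: U'_def L'_def V'_def pad_index\<close>)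
      also have "\<dots> = (if i = j then 1 else 0)" using ij by (subst sum.delta) auto
      finally show ?thesis using R True ij by (simp add: D_def pad_index)
    next
      case False
      show ?thesis
      proof (cases "j < k")
        case True
        have "(\<Sum>a<n. U' $$ (i,a) * L' $$ (a,a) * V' $$ (a,j)) = (\<Sum>a<n. if a = j then (if i = j then 1 else 0) else 0)"
          by (rule sum.cong) (use True ij in \<open>auto simp: U'_def L'_def V'_def pad_index\<close>)
        also have "\<dots> = (if i = j then 1 else 0)" using ij by (subst sum.delta) auto
        finally show ?thesis using R True ij by (simp add: D_def pad_index)
      next
        case jk: False
        have "(\<Sum>a<n. U' $$ (i,a) * L' $$ (a,a) * V' $$ (a,j)) = (\<Sum>a<n. u $$ (i,a) * l $$ (a,a) * v $$ (a,j))"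
        proof (rule sum.cong)
          fix a assume a: "a \<in> {..<n}"
          show "U' $$ (i,a) * L' $$ (a,a) * V' $$ (a,j) = u $$ (i,a) * l $$ (a,a) * v $$ (a,j)"
          proof (cases "a < k")
            case True
            then have "u $$ (i,a) = 0" using uz[of i a] ij a False by auto
            then show ?thesis using True False a ij by (simp add: U'_def pad_index)
          next
            case ak: False
            then show ?thesis using False jk a ij by (simp add: U'_def L'_def V'_def pad_index)
          qed
        qed simp
        then show ?thesis using R False jk ij Xs[OF ij] by (simp add: D_def pad_index)
      qed
    qed
  qed (auto simp: D_def U'_def V'_def pad_def)
  have ut: "upper_triangular U'" unfolding upper_triangular_def U'_def
    using uz by (auto simp: pad_index pad_def)
  have dU: "(\<Prod>i = 0..<n. U' $$ (i,i)) = 1"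
    by (rule prod.neutral) (auto simp: U'_def pad_index ud)
  have detU: "det U' = 1"
    using det_upper_triangular[OF ut, of n] dU by (simp add: U'_def prod_list_diag_prod)
  have utv: "upper_triangular (transpose_mat V')" unfolding upper_triangular_def V'_def
    using vz by (auto simp: pad_index pad_def)
  have dV: "(\<Prod>i = 0..<n. transpose_mat V' $$ (i,i)) = 1"
    by (rule prod.neutral) (auto simp: V'_def pad_index vd pad_def)
  have detV: "det V' = 1"
  proof -
    have "det V' = det (transpose_mat V')" using det_transpose[of V' n] by (simp add: V'_def)
    also have "\<dots> = 1" using det_upper_triangular[OF utv, of n] dV
      by (simp add: V'_def prod_list_diag_prod)
    finally show ?thesis .
  qed
  have utl: "upper_triangular L'" unfolding upper_triangular_def L'_def
    using ld by (auto simp: pad_index pad_def)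
  obtain g where g: "\<forall>i<n. l $$ (i,i) * g i = 1" using GL_diag_unit[OF lL] by blast
  have detL: "det L' = (\<Prod>i\<in>{0..<n}. L' $$ (i,i))"
    using det_upper_triangular[OF utl, of n] by (simp add: L'_def prod_list_diag_prod)
  define g' where "g' i = (if i < k then 1 else g i)" for i
  have "det L' * (\<Prod>i\<in>{0..<n}. g' i) = (\<Prod>i\<in>{0..<n}. L' $$ (i,i) * g' i)"
    unfolding detL by (simp add: prod.distrib)
  also have "\<dots> = (\<Prod>i\<in>{0..<n}. 1)"
    by (rule prod.cong) (use g in \<open>auto simp: L'_def pad_index g'_def\<close>)
  finally have detL1: "det L' * (\<Prod>i\<in>{0..<n}. g' i) = 1" by simp
  have detD: "det D \<noteq> 0"
  proof
    assume "det D = 0"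
    have c1: "U' * L' \<in> carrier_mat n n" unfolding U'_def L'_def by (rule mult_carrier_mat[OF pad_carrier pad_carrier])
    have "det D = det (U' * L') * det V'" unfolding DU by (rule det_mult[OF c1]) (simp add: V'_def)
    also have "det (U' * L') = det U' * det L'" by (rule det_mult[of _ n]) (simp_all add: U'_def L'_def)
    finally have "det D = det L'" using detU detV by simp
    then have "det L' = 0" using \<open>det D = 0\<close> by simp
    then show False using detL1 by simp
  qed
  have Dc: "D \<in> carrier_mat n n" by (simp add: D_def)
  obtain \<sigma> where \<sigma>: "\<sigma> permutes {0..<n}" and nz: "(\<Prod>i = 0..<n. D $$ (i, \<sigma> i)) \<noteq> 0"
  proof -
    have "(\<Sum>p\<in>{p. p permutes {0..<n}}. signof p * (\<Prod>i = 0..<n. D $$ (i, p i))) \<noteq> 0"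
      using detD Dc unfolding det_def by simp
    then obtain s where "s \<in> {p. p permutes {0..<n}}" "signof s * (\<Prod>i = 0..<n. D $$ (i, s i)) \<noteq> 0"
      by (meson sum.neutral)
    then show ?thesis using that by (metis mem_Collect_eq mult_zero_right)
  qed
  have Dnz: "D $$ (i, \<sigma> i) \<noteq> 0" if "i < n" for i
  proof
    assume "D $$ (i, \<sigma> i) = 0"
    then have "(\<Prod>i = 0..<n. D $$ (i, \<sigma> i)) = 0" using that by (intro prod_zero) auto
    then show False using nz by simp
  qed
  have \<sigma>n: "\<sigma> i < n" if "i < n" for i using that permutes_in_image[OF \<sigma>] by auto
  have fix\<sigma>: "\<sigma> i = i" if "i < k" "i < n" for i
    using Dnz[OF that(2)] that \<sigma>n[OF that(2)] by (auto simp: D_def pad_index split: if_splits)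
  define I where "I = {i. k \<le> i \<and> i < n \<and> c < p i}"
  define J where "J = {j. k \<le> j \<and> j < n \<and> c < q j}"
  have subIJ: "\<sigma> ` I \<subseteq> J"
  proof
    fix y assume "y \<in> \<sigma> ` I"
    then obtain i where i: "i \<in> I" "y = \<sigma> i" by auto
    have ik: "k \<le> i" "i < n" "c < p i" using i unfolding I_def by auto
    have sk: "k \<le> \<sigma> i"
    proof (rule ccontr)
      assume "\<not> k \<le> \<sigma> i"
      then have "\<sigma> (\<sigma> i) = \<sigma> i" using fix\<sigma> \<sigma>n[OF ik(2)] by auto
      then have "\<sigma> i = i" by (simp add: inj_eq[OF permutes_inj[OF \<sigma>]])
      then show False using \<open>\<not> k \<le> \<sigma> i\<close> ik by simp
    qed
    have "D $$ (i, \<sigma> i) = u' $$ (p i, q (\<sigma> i))"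
      using ik sk \<sigma>n[OF ik(2)] Xe[OF ik(2) \<sigma>n[OF ik(2)]] by (simp add: D_def pad_index)
    moreover have "p i < n" "q (\<sigma> i) < n"
      using ik \<sigma>n[OF ik(2)] permutes_in_image[OF p] permutes_in_image[OF q] by auto
    ultimately have "c < q (\<sigma> i)"
    proof -
      assume a1: "D $$ (i, \<sigma> i) = u' $$ (p i, q (\<sigma> i))" and a2: "p i < n" "q (\<sigma> i) < n"
      show ?thesis
      proof (rule ccontr)
        assume "\<not> c < q (\<sigma> i)"
        then have "q (\<sigma> i) < p i" using ik(3) by simp
        then have "u' $$ (p i, q (\<sigma> i)) = 0" using u'z a2 by blast
        then show False using a1 Dnz[OF ik(2)] by simp
      qed
    qed
    then show "y \<in> J" using i sk \<sigma>n[OF ik(2)] unfolding J_def by auto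
  qed
  have injI: "inj_on \<sigma> I" by (rule inj_on_subset[OF permutes_inj[OF \<sigma>]]) simp
  have finJ: "finite J" by (rule finite_subset[of _ "{..<n}"]) (auto simp: J_def)
  have cIJ: "card I \<le> card J" by (rule card_inj_on_le[OF injI subIJ finJ])
  have cc: "cnt w k n c = card {i. k \<le> i \<and> i < n \<and> c < w i}" for w
  proof -
    have "cnt w k n c = (\<Sum>i\<in>{i\<in>{k..<n}. c < w i}. (1::nat))"
      unfolding cnt_def by (rule sum.inter_filter[symmetric]) simp
    also have "\<dots> = card {i\<in>{k..<n}. c < w i}" by simp
    also have "{i\<in>{k..<n}. c < w i} = {i. k \<le> i \<and> i < n \<and> c < w i}" by auto
    finally show ?thesis .
  qed
  show ?thesis using cIJ unfolding I_def J_def cc .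
qed

theorem proposition3p2:
  fixes n :: nat and r t :: "'a::{comm_ring_1,finite} mat"
  assumes "local_ring TYPE('a)"
    and "r \<in> Wmat n" and "t \<in> Wmat n"
    and "wlen n t \<le> wlen n r" and "t \<noteq> r"
  shows "{u * l * v | u l v. u \<in> Umat n \<and> l \<in> Lmat n \<and> v \<in> Vmat n}
           \<inter> {mat_inv n t * u * r | u. u \<in> Umat n} = {}"
proof -
  obtain q where q: "q permutes {..<n}" "r = perm_mat n q" using assms(2) unfolding Wmat_def by blast
  obtain p where p: "p permutes {..<n}" "t = perm_mat n p" using assms(3) unfolding Wmat_def by blast
  have pq: "p \<noteq> q" using assms(5) p(2) q(2) by blast
  have w1: "wlen n t = invs n p" unfolding p(2) by (rule wlen_perm[OF p(1)])
  have w2: "wlen n r = invs n q" unfolding q(2) by (rule wlen_perm[OF q(1)])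
  have lenle: "invs n p \<le> invs n q" using assms(4) unfolding w1 w2 .
  show ?thesis
  proof (rule ccontr)
    assume "{u * l * v | u l v. u \<in> Umat n \<and> l \<in> Lmat n \<and> v \<in> Vmat n}
           \<inter> {mat_inv n t * u * r | u. u \<in> Umat n} \<noteq> {}"
    then obtain x where "x \<in> {u * l * v | u l v. u \<in> Umat n \<and> l \<in> Lmat n \<and> v \<in> Vmat n}"
      "x \<in> {mat_inv n t * u * r | u. u \<in> Umat n}" by blast
    then obtain u l v u' where uU: "u \<in> Umat n" and lL: "l \<in> Lmat n" and vV: "v \<in> Vmat n"
      and u'U: "u' \<in> Umat n" and x1: "x = u * l * v" and x2: "x = mat_inv n t * u' * r" by blast
    have mi: "mat_inv n t = perm_mat n (Hilbert_Choice.inv p)" unfolding p(2) by (rule mat_inv_perm[OF p(1)])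
    have eq: "u * l * v = perm_mat n (Hilbert_Choice.inv p) * u' * perm_mat n q"
      using x1 x2 unfolding mi q(2) by simp
    have "\<forall>k c. cnt p k n c \<le> cnt q k n c"
      using key[OF uU lL vV u'U p(1) q(1) eq] by blast
    then have "p = q \<or> invs n q < invs n p" by (rule bruhat[OF p(1) q(1)])
    then show False using pq lenle by simp
  qed
qed

end
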